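(* Let $a,b,c,k,m>0$ and consider the system $$\frac{dx}{dt}=bx(1-x-cy),\qquad \frac{dy}{dt}=y\Big(\frac{1}{1+kx}-y-ax-mxy\Big).$$ Define $k^*=\frac1a-1$, $m_1=1-ac-k$, $m_2=\frac{2ack+ac-k-1}{1+k}$, the cubic $u(x)=A_1x^3+A_2x^2+A_3x+A_4$ with $A_1=km$, $A_2=(-ac-m+1)k+m$, $A_3=-ac-k-m+1$, $A_4=c-1$, and (when the discriminant $\Delta=4A_2^2-12A_1A_3$ of $u'$ is positive) let $x_{v2}$ denote the larger real root of $u'(x)=3A_1x^2+2A_2x+A_3$. A positive equilibrium is an equilibrium $(x,y)$ with $x>0,y>0$. Then: (1) If $m=m_1$, $0<c<1$ and $0<k<k^*$, the system has a unique positive equilibrium. (2) Suppose $m>m_1$. (a) Suppose $c>1$ (and $\Delta>0$). (i) If $u(x_{v2})=0$ and $m>m_2$, the system has a unique positive equilibrium. (ii) If $u(x_{v2})<0$: if $m>m_2$ and $k\ge k^*$, the system has a unique positive equilibrium; if $m>m_2$ and $0<k<k^*$, the system has two positive equilibria; if $m=m_2$, the system has a unique positive equilibrium; if $0<m<m_2$ and $k>k^*$, the system has a unique positive equilibrium. (b) If $0<c\le 1$ and $0<k<k^*$, the system has a unique positive equilibrium. (3) If $0<m<m_1$, $0<c<1$ and $0<k<k^*$, the system has a unique positive equilibrium.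
   Context: All parameters are positive. Positive equilibria have the form $(x,(1-x)/c)$ where $x\in(0,1)$ is a root of $u$. *)

theory Defs
  imports Complex_Main
begin

definition pos_equilibria :: "real \<Rightarrow> real \<Rightarrow> real \<Rightarrow> real \<Rightarrow> real \<Rightarrow> (real \<times> real) set" where
  "pos_equilibria a b c k m =
     {(x, y). x > 0 \<and> y > 0 \<and> b * x * (1 - x - c * y) = 0 \<and>
              y * (1 / (1 + k * x) - y - a * x - m * x * y) = 0}"

definition kstar :: "real \<Rightarrow> real" where "kstar a = 1 / a - 1"
definition m1 :: "real \<Rightarrow> real \<Rightarrow> real \<Rightarrow> real" where "m1 a c k = 1 - a * c - k"
definition m2 :: "real \<Rightarrow> real \<Rightarrow> real \<Rightarrow> real" where
  "m2 a c k = (2 * a * c * k + a * c - k - 1) / (1 + k)"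

definition A1 :: "real \<Rightarrow> real \<Rightarrow> real" where "A1 k m = k * m"
definition A2 :: "real \<Rightarrow> real \<Rightarrow> real \<Rightarrow> real \<Rightarrow> real" where
  "A2 a c k m = (- a * c - m + 1) * k + m"
definition A3 :: "real \<Rightarrow> real \<Rightarrow> real \<Rightarrow> real \<Rightarrow> real" where
  "A3 a c k m = - a * c - k - m + 1"
definition A4 :: "real \<Rightarrow> real" where "A4 c = c - 1"

definition u :: "real \<Rightarrow> real \<Rightarrow> real \<Rightarrow> real \<Rightarrow> real \<Rightarrow> real" where
  "u a c k m x = A1 k m * x ^ 3 + A2 a c k m * x ^ 2 + A3 a c k m * x + A4 c"

definition Delta :: "real \<Rightarrow> real \<Rightarrow> real \<Rightarrow> real \<Rightarrow> real" where
  "Delta a c k m = 4 * (A2 a c k m)^2 - 12 * A1 k m * A3 a c k m"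

text \<open>Larger real root of u'(x) = 3 A1 x^2 + 2 A2 x + A3 (meaningful when Delta > 0, A1 > 0).\<close>
definition xv2 :: "real \<Rightarrow> real \<Rightarrow> real \<Rightarrow> real \<Rightarrow> real" where
  "xv2 a c k m = (- 2 * A2 a c k m + sqrt (Delta a c k m)) / (6 * A1 k m)"

end

theory Submission
  imports Defs
begin

definition roots :: "real \<Rightarrow> real \<Rightarrow> real \<Rightarrow> real \<Rightarrow> real set" where
  "roots a c k m = {x. 0 < x \<and> x < 1 \<and> u a c k m x = 0}"

definition up :: "real \<Rightarrow> real \<Rightarrow> real \<Rightarrow> real \<Rightarrow> real \<Rightarrow> real" where
  "up a c k m x = 3 * A1 k m * x^2 + 2 * A2 a c k m * x + A3 a c k m"

lemma key_identity:
  assumes "c > 0" "1 + k * x > 0"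
  shows "c * (1 + k * x) * (1 / (1 + k * x) - (1 - x) / c - a * x - m * x * ((1 - x) / c))
         = u a c k m x"
proof -
  have gen: "\<And>e t. c * (1 + k * x) * (e - t - a * x - m * x * t)
    = c * ((1 + k * x) * e) - (1 + k * x) * (c * t) - c * (1 + k * x) * a * x
      - m * x * (1 + k * x) * (c * t)" by (simp add: algebra_simps)
  have "c * (1 + k * x) * (1 / (1 + k * x) - (1 - x) / c - a * x - m * x * ((1 - x) / c))
    = c * ((1 + k * x) * (1 / (1 + k * x))) - (1 + k * x) * (c * ((1 - x) / c)) - c * (1 + k * x) * a * x
      - m * x * (1 + k * x) * (c * ((1 - x) / c))" by (rule gen)
  also have "\<dots> = c - (1 + k * x) * (1 - x) - c * (1 + k * x) * a * x - m * x * (1 + k * x) * (1 - x)"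
    using assms by simp
  also have "\<dots> = u a c k m x" unfolding u_def A1_def A2_def A3_def A4_def
    by (simp add: power2_eq_square power3_eq_cube algebra_simps)
  finally show ?thesis .
qed

lemma peq:
  assumes "b > 0" "c > 0" "k > 0"
  shows "pos_equilibria a b c k m = (\<lambda>x. (x, (1 - x) / c)) ` roots a c k m"
proof (rule set_eqI, clarify)
  fix x y
  show "((x, y) \<in> pos_equilibria a b c k m) = ((x, y) \<in> (\<lambda>x. (x, (1 - x) / c)) ` roots a c k m)"
  proof
    assume h: "(x, y) \<in> pos_equilibria a b c k m"
    hence x: "x > 0" "y > 0" and e1: "b * x * (1 - x - c * y) = 0"
      and e2: "y * (1 / (1 + k * x) - y - a * x - m * x * y) = 0"
      by (auto simp: pos_equilibria_def)
    have "1 - x - c * y = 0" using e1 x assms by simp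
    hence yd: "y = (1 - x) / c" using assms by (simp add: field_simps)
    have "c * y > 0" using x assms by simp
    hence x1: "x < 1" using \<open>1 - x - c * y = 0\<close> by linarith
    have "1 / (1 + k * x) - y - a * x - m * x * y = 0" using e2 x by simp
    have kx: "1 + k * x > 0" using assms x by (simp add: add_pos_pos)
    have "u a c k m x = 0" using key_identity[of c k x a m] assms kx
      \<open>1 / (1 + k * x) - y - a * x - m * x * y = 0\<close> yd by simp
    thus "(x, y) \<in> (\<lambda>x. (x, (1 - x) / c)) ` roots a c k m"
      using x x1 yd by (auto simp: roots_def)
  next
    assume "(x, y) \<in> (\<lambda>x. (x, (1 - x) / c)) ` roots a c k m"
    hence x: "x > 0" "x < 1" "u a c k m x = 0" and yd: "y = (1 - x) / c"
      by (auto simp: roots_def)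
    have yp: "y > 0" using yd x assms by simp
    have kx: "1 + k * x > 0" using assms x by (simp add: add_pos_pos)
    have "c * (1 + k * x) * (1 / (1 + k * x) - y - a * x - m * x * y) = 0"
      using key_identity[of c k x a m] assms kx x yd by simp
    hence "1 / (1 + k * x) - y - a * x - m * x * y = 0" using assms kx by simp
    moreover have "1 - x - c * y = 0" using yd assms by simp
    ultimately show "(x, y) \<in> pos_equilibria a b c k m"
      using x yp by (simp add: pos_equilibria_def)
  qed
qed

lemma card_eq:
  assumes "b > 0" "c > 0" "k > 0"
  shows "card (pos_equilibria a b c k m) = card (roots a c k m)"
  unfolding peq[OF assms] by (simp add: card_image inj_on_def)

lemma simpson:
  "u a c k m q - u a c k m p = (q - p) * (up a c k m p + 4 * up a c k m ((p + q) / 2) + up a c k m q) / 6"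
  unfolding u_def up_def by (simp add: field_simps power2_eq_square power3_eq_cube)

lemma uniq1:
  "p * u a c k m q - q * u a c k m p = (q - p) * (A1 k m * p * q * (q + p) + A2 a c k m * p * q - A4 c)"
  unfolding u_def by (simp add: power2_eq_square power3_eq_cube algebra_simps)

lemma uniq2:
  "p^2 * u a c k m q - q^2 * u a c k m p = (q - p) * (A1 k m * p^2 * q^2 - A3 a c k m * p * q - A4 c * (p + q))"
  unfolding u_def by (simp add: power2_eq_square power3_eq_cube algebra_simps)

lemma u_cont: "continuous_on S (u a c k m)"
  unfolding u_def by (intro continuous_intros)

lemma root_between:
  assumes "p < q" "u a c k m p * u a c k m q < 0"
  shows "\<exists>r. p < r \<and> r < q \<and> u a c k m r = 0"
proof (cases "u a c k m p < 0")
  case True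
  hence "u a c k m q > 0" using assms(2) by (simp add: mult_less_0_iff)
  then obtain r where "p \<le> r" "r \<le> q" "u a c k m r = 0"
    using IVT'[of "u a c k m" p 0 q] True assms u_cont by force
  thus ?thesis using True \<open>u a c k m q > 0\<close> by (metis order.order_iff_strict less_irrefl)
next
  case False
  hence "u a c k m p > 0" "u a c k m q < 0" using assms(2) by (auto simp: mult_less_0_iff)
  then obtain r where "p \<le> r" "r \<le> q" "u a c k m r = 0"
    using IVT2'[of "u a c k m" q 0 p] assms u_cont by force
  thus ?thesis using \<open>u a c k m p > 0\<close> \<open>u a c k m q < 0\<close> by (metis order.order_iff_strict less_irrefl)
qed

lemma u0: "u a c k m 0 = c - 1" by (simp add: u_def A4_def)
lemma u1: "u a c k m 1 = c * (1 - a * (1 + k))"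
  by (simp add: u_def A1_def A2_def A3_def A4_def algebra_simps)
lemma up1: assumes "k > 0" shows "(1 + k) * (m - m2 a c k) = up a c k m 1"
proof -
  have "(1 + k) * m2 a c k = 2 * a * c * k + a * c - k - 1" unfolding m2_def
    using \<open>k > 0\<close> by simp
  thus ?thesis by (simp add: up_def A1_def A2_def A3_def algebra_simps)
qed
lemma A3m1: "A3 a c k m = m1 a c k - m" by (simp add: A3_def m1_def)

lemma kstar_iff: "a > 0 \<Longrightarrow> (k < kstar a) = (a * (1 + k) < 1)"
  by (simp add: kstar_def field_simps)

lemma card1:
  assumes "r \<in> roots a c k m" "\<And>x. x \<in> roots a c k m \<Longrightarrow> x = r"
  shows "card (roots a c k m) = 1"
proof -
  have "roots a c k m = {r}" using assms by blast
  thus ?thesis by simp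
qed

lemma caseB:
  assumes pos: "a > 0" "c > 0" "k > 0" "m > 0" and c1: "c \<le> 1" and ks: "k < kstar a"
    and alt: "A3 a c k m < 0 \<or> (c < 1 \<and> (A3 a c k m \<le> 0 \<or> A2 a c k m \<ge> 0))"
  shows "card (roots a c k m) = 1"
proof -
  have A1p: "A1 k m > 0" using pos by (simp add: A1_def)
  have A4n: "A4 c \<le> 0" using c1 by (simp add: A4_def)
  have u1p: "u a c k m 1 > 0" using ks pos by (simp add: u1 kstar_iff)
  have uniq: False if h: "0 < p" "p < q" "u a c k m p = 0" "u a c k m q = 0" for p q
  proof (cases "A3 a c k m \<le> 0")
    case True
    have "0 < A1 k m * p^2 * q^2 - A3 a c k m * p * q - A4 c * (p + q)"
    proof -
      have "A1 k m * p^2 * q^2 > 0" using A1p h by simp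
      moreover have "A3 a c k m * (p * q) \<le> 0" using True h by (intro mult_nonpos_nonneg) auto
      hence "- A3 a c k m * p * q \<ge> 0" by (simp add: mult.assoc)
      moreover have "A4 c * (p + q) \<le> 0" using A4n h by (intro mult_nonpos_nonneg) auto
      hence "- A4 c * (p + q) \<ge> 0" by simp
      ultimately show ?thesis by linarith
    qed
    hence "(q - p) * (A1 k m * p^2 * q^2 - A3 a c k m * p * q - A4 c * (p + q)) > 0"
      using h by simp
    thus False using uniq2[of p a c k m q] h by simp
  next
    case False
    hence A2p: "A2 a c k m \<ge> 0" using alt by auto
    have "0 < A1 k m * p * q * (q + p) + A2 a c k m * p * q - A4 c"
    proof -
      have "A1 k m * p * q * (q + p) > 0" using A1p h by simp
      moreover have "A2 a c k m * p * q \<ge> 0" using A2p h by simp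
      ultimately show ?thesis using A4n by linarith
    qed
    hence "(q - p) * (A1 k m * p * q * (q + p) + A2 a c k m * p * q - A4 c) > 0"
      using h by simp
    thus False using uniq1[of p a c k m q] h by simp
  qed
  obtain r where r: "0 < r" "r < 1" "u a c k m r = 0"
  proof (cases "c < 1")
    case True
    hence "u a c k m 0 * u a c k m 1 < 0" using u1p by (simp add: u0 mult_neg_pos)
    thus ?thesis using root_between[of 0 1 a c k m] that by auto
  next
    case False
    hence c1: "c = 1" using c1 by simp
    define h where "h x = A1 k m * x^2 + A2 a c k m * x + A3 a c k m" for x
    have hu: "u a c k m x = x * h x" for x
      using c1 by (simp add: u_def h_def A4_def power2_eq_square power3_eq_cube algebra_simps)
    have A3n: "A3 a c k m < 0" using alt c1 by auto
    have h0: "h 0 < 0" using A3n by (simp add: h_def)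
    have h1: "h 1 > 0" using u1p hu[of 1] by simp
    have "continuous_on {0..1} h" unfolding h_def by (intro continuous_intros)
    then obtain r where "0 \<le> r" "r \<le> 1" "h r = 0"
      using IVT'[of h 0 0 1] h0 h1 by force
    moreover hence "r \<noteq> 0" "r \<noteq> 1" using h0 h1 by auto
    ultimately show ?thesis using that[of r] hu[of r] by force
  qed
  show ?thesis
  proof (rule card1)
    show "r \<in> roots a c k m" using r by (simp add: roots_def)
    fix x assume "x \<in> roots a c k m"
    hence x: "0 < x" "x < 1" "u a c k m x = 0" by (auto simp: roots_def)
    show "x = r"
    proof (rule ccontr)
      assume "x \<noteq> r"
      hence "x < r \<or> r < x" by linarith
      thus False using uniq[of x r] uniq[of r x] x r by auto
    qed
  qed
qed

lemma quad_fact: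
  fixes A B C x :: real
  assumes "A > 0" "d = 4 * B^2 - 12 * A * C" "d \<ge> 0"
  shows "3 * A * x^2 + 2 * B * x + C = 3 * A * (x - (-2 * B - sqrt d) / (6 * A)) * (x - (-2 * B + sqrt d) / (6 * A))"
proof -
  define t where "t = sqrt d"
  have sd: "t * t = 4 * B^2 - 12 * A * C" using assms by (simp add: t_def)
  have "3 * A * (x - (-2 * B - t) / (6 * A)) * (x - (-2 * B + t) / (6 * A))
     = (36 * A^2 * x^2 + 24 * A * B * x + 4 * B^2 - t * t) / (12 * A)"
    using assms(1) by (simp add: field_simps power2_eq_square)
  also have "\<dots> = 3 * A * x^2 + 2 * B * x + C" using assms(1) unfolding sd
    by (simp add: field_simps power2_eq_square)
  finally show ?thesis by (simp add: t_def)
qed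

lemma caseA:
  assumes pos: "a > 0" "c > 0" "k > 0" "m > 0" and A3n: "A3 a c k m < 0" and c1: "c > 1"
    and D: "Delta a c k m > 0"
  shows "(u a c k m (xv2 a c k m) = 0 \<and> m > m2 a c k \<longrightarrow> card (roots a c k m) = 1) \<and>
           (u a c k m (xv2 a c k m) < 0 \<longrightarrow>
              (m > m2 a c k \<and> k \<ge> kstar a \<longrightarrow> card (roots a c k m) = 1) \<and>
              (m > m2 a c k \<and> k < kstar a \<longrightarrow> card (roots a c k m) = 2) \<and>
              (m = m2 a c k \<longrightarrow> card (roots a c k m) = 1) \<and>
              (m < m2 a c k \<and> k > kstar a \<longrightarrow> card (roots a c k m) = 1))"
proof -
  define s where "s = xv2 a c k m"
  define n where "n = (- 2 * A2 a c k m - sqrt (Delta a c k m)) / (6 * A1 k m)"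
  have A1p: "A1 k m > 0" using pos by (simp add: A1_def)
  have upf: "up a c k m x = 3 * A1 k m * (x - n) * (x - s)" for x
    unfolding up_def s_def n_def xv2_def
    by (rule quad_fact[OF A1p]) (use D in \<open>auto simp: Delta_def\<close>)
  have "(2 * A2 a c k m)^2 < Delta a c k m"
    using A1p A3n by (simp add: Delta_def power2_eq_square mult_pos_neg)
  hence "sqrt ((2 * A2 a c k m)^2) < sqrt (Delta a c k m)" by (rule real_sqrt_less_mono)
  hence sq: "\<bar>2 * A2 a c k m\<bar> < sqrt (Delta a c k m)" by (simp only: real_sqrt_abs)
  have s0: "s > 0" unfolding s_def xv2_def using sq A1p by (intro divide_pos_pos) auto
  have n0: "n < 0" unfolding n_def using sq A1p by (intro divide_neg_pos) auto
  have upneg: "up a c k m x < 0" if "n < x" "x < s" for x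
  proof -
    have "3 * A1 k m * (x - n) > 0" using that A1p by simp
    thus ?thesis unfolding upf using that by (simp add: mult_pos_neg)
  qed
  have uppos: "up a c k m x > 0" if "s < x" for x
    unfolding upf using that A1p s0 n0 by simp
  have ups: "up a c k m s = 0" unfolding upf by simp
  have dec: "u a c k m q < u a c k m p" if "0 \<le> p" "p < q" "q \<le> s" for p q
  proof -
    have "up a c k m p < 0" using that n0 by (intro upneg) auto
    moreover have "up a c k m ((p + q) / 2) < 0" using that n0 by (intro upneg) auto
    moreover have "up a c k m q \<le> 0"
      using that n0 upneg[of q] ups by (cases "q = s") auto
    ultimately have "up a c k m p + 4 * up a c k m ((p + q) / 2) + up a c k m q < 0" by linarith
    hence "(q - p) * (up a c k m p + 4 * up a c k m ((p + q) / 2) + up a c k m q) < 0"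
      using that by (simp add: mult_pos_neg)
    thus ?thesis using simpson[of a c k m q p] by linarith
  qed
  have inc: "u a c k m p < u a c k m q" if "s \<le> p" "p < q" for p q
  proof -
    have "up a c k m p \<ge> 0" using that uppos[of p] ups by (cases "p = s") auto
    moreover have "up a c k m ((p + q) / 2) > 0" using that by (intro uppos) auto
    moreover have "up a c k m q > 0" using that by (intro uppos) auto
    ultimately have "up a c k m p + 4 * up a c k m ((p + q) / 2) + up a c k m q > 0" by linarith
    hence "(q - p) * (up a c k m p + 4 * up a c k m ((p + q) / 2) + up a c k m q) > 0"
      using that by simp
    thus ?thesis using simpson[of a c k m q p] by linarith
  qed
  have injl: "x = y" if "0 \<le> x" "x \<le> s" "0 \<le> y" "y \<le> s" "u a c k m x = u a c k m y" for x y
  proof (rule ccontr)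
    assume "x \<noteq> y"
    hence "x < y \<or> y < x" by linarith
    thus False using dec[of x y] dec[of y x] that by auto
  qed
  have injr: "x = y" if "s \<le> x" "s \<le> y" "u a c k m x = u a c k m y" for x y
  proof (rule ccontr)
    assume "x \<noteq> y"
    hence "x < y \<or> y < x" by linarith
    thus False using inc[of x y] inc[of y x] that by auto
  qed
  have u0p: "u a c k m 0 > 0" using c1 by (simp add: u0)
  have up1: "(1 + k) * (m - m2 a c k) = up a c k m 1" using up1 pos by simp
  have s1: "s < 1" if "m > m2 a c k"
  proof (rule ccontr)
    assume "\<not> s < 1"
    hence "1 \<le> s" by simp
    hence "up a c k m 1 \<le> 0" using upneg[of 1] ups n0 by (cases "s = 1") auto
    moreover have "(1 + k) * (m - m2 a c k) > 0" using that pos by simp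
    ultimately show False using up1 by linarith
  qed
  have part1: "card (roots a c k m) = 1" if "u a c k m s = 0" "m > m2 a c k"
  proof (rule card1)
    show "s \<in> roots a c k m" using s0 s1 that by (simp add: roots_def)
    fix x assume "x \<in> roots a c k m"
    hence x: "0 < x" "x < 1" "u a c k m x = 0" by (auto simp: roots_def)
    show "x = s"
    proof (cases "x \<le> s")
      case True thus ?thesis using injl[of x s] x that s0 by auto
    next
      case False thus ?thesis using injr[of x s] x that by auto
    qed
  qed
  have part2: "(m > m2 a c k \<and> k \<ge> kstar a \<longrightarrow> card (roots a c k m) = 1) \<and>
              (m > m2 a c k \<and> k < kstar a \<longrightarrow> card (roots a c k m) = 2) \<and>
              (m = m2 a c k \<longrightarrow> card (roots a c k m) = 1) \<and>
              (m < m2 a c k \<and> k > kstar a \<longrightarrow> card (roots a c k m) = 1)"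
    if us: "u a c k m s < 0"
  proof -
    obtain r1 where r1: "0 < r1" "r1 < s" "u a c k m r1 = 0"
      using root_between[of 0 s a c k m] s0 u0p us by (auto simp: mult_pos_neg)
    have low: "x = r1" if "0 < x" "x \<le> s" "u a c k m x = 0" for x
      using injl[of x r1] that r1 by auto
    have c2: "card (roots a c k m) = 1" if "\<And>x. x \<in> roots a c k m \<Longrightarrow> x \<le> s" "r1 < 1"
    proof (rule card1)
      show "r1 \<in> roots a c k m" using r1 that by (simp add: roots_def)
      fix x assume "x \<in> roots a c k m"
      thus "x = r1" using low[of x] that(1)[of x] by (auto simp: roots_def)
    qed
    have P1: "card (roots a c k m) = 1" if "m > m2 a c k" "k \<ge> kstar a"
    proof (rule c2)
      have "\<not> k < kstar a" using that by simp
      hence "\<not> a * (1 + k) < 1" using kstar_iff[of a k] pos by simp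
      hence u1n: "u a c k m 1 \<le> 0" using pos by (simp add: u1 mult_nonneg_nonpos)
      fix x assume "x \<in> roots a c k m"
      hence x: "0 < x" "x < 1" "u a c k m x = 0" by (auto simp: roots_def)
      show "x \<le> s"
      proof (rule ccontr)
        assume "\<not> x \<le> s"
        thus False using inc[of x 1] x u1n by auto
      qed
    next
      show "r1 < 1" using s1 that r1 by simp
    qed
    have P2: "card (roots a c k m) = 2" if mm: "m > m2 a c k" "k < kstar a"
    proof -
      have u1p: "u a c k m 1 > 0" using that pos by (simp add: u1 kstar_iff)
      obtain r2 where r2: "s < r2" "r2 < 1" "u a c k m r2 = 0"
        using root_between[of s 1 a c k m] s1[OF mm(1)] u1p us by (auto simp: mult_neg_pos)
      have "roots a c k m = {r1, r2}"
      proof (rule set_eqI)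
        fix x
        show "x \<in> roots a c k m \<longleftrightarrow> x \<in> {r1, r2}"
        proof
          assume "x \<in> roots a c k m"
          hence x: "0 < x" "x < 1" "u a c k m x = 0" by (auto simp: roots_def)
          show "x \<in> {r1, r2}"
          proof (cases "x \<le> s")
            case True thus ?thesis using low x by auto
          next
            case False thus ?thesis using injr[of x r2] x r2 by auto
          qed
        next
          assume "x \<in> {r1, r2}"
          thus "x \<in> roots a c k m" using r1 r2 s1 that by (auto simp: roots_def)
        qed
      qed
      moreover have "r1 \<noteq> r2" using r1 r2 by simp
      ultimately show ?thesis by simp
    qed
    have P3: "card (roots a c k m) = 1" if "m = m2 a c k"
    proof -
      have "up a c k m 1 = 0" using up1 that by simp
      hence "s = 1" unfolding upf using A1p n0 by simp
      show ?thesis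
        by (rule c2) (use \<open>s = 1\<close> r1 in \<open>auto simp: roots_def\<close>)
    qed
    have P4: "card (roots a c k m) = 1" if "m < m2 a c k" "k > kstar a"
    proof -
      have "up a c k m 1 < 0" using up1 that pos
        by (metis mult_pos_neg add_pos_pos zero_less_one diff_less_0_iff_less)
      hence "1 < s" using uppos[of 1] ups by (cases "s < 1"; cases "s = 1") auto
      have "\<not> k < kstar a" using that by simp
      have "a * (1 + k) > 1" using that pos by (simp add: kstar_def field_simps)
      hence u1n: "u a c k m 1 < 0" using pos by (simp add: u1 mult_pos_neg)
      obtain r where r: "0 < r" "r < 1" "u a c k m r = 0"
        using root_between[of 0 1 a c k m] u0p u1n by (auto simp: mult_pos_neg)
      show ?thesis
      proof (rule card1)
        show "r \<in> roots a c k m" using r by (simp add: roots_def)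
        fix x assume "x \<in> roots a c k m"
        thus "x = r" using injl[of x r] r \<open>1 < s\<close> by (auto simp: roots_def)
      qed
    qed
    show ?thesis using P1 P2 P3 P4 by blast
  qed
  show ?thesis using part1 part2 unfolding s_def by blast
qed

lemma A2m1: "A2 a c k m = k * (m1 a c k - m + k) + m" by (simp add: A2_def m1_def algebra_simps)

theorem theorem5:
  fixes a b c k m :: real
  assumes pos: "a > 0" "b > 0" "c > 0" "k > 0" "m > 0"
  shows
   "(m = m1 a c k \<and> c < 1 \<and> k < kstar a \<longrightarrow> card (pos_equilibria a b c k m) = 1) \<and>
    (m > m1 a c k \<longrightarrow>
       ((c > 1 \<and> Delta a c k m > 0 \<longrightarrow>
           (u a c k m (xv2 a c k m) = 0 \<and> m > m2 a c k \<longrightarrow> card (pos_equilibria a b c k m) = 1) \<and>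
           (u a c k m (xv2 a c k m) < 0 \<longrightarrow>
              (m > m2 a c k \<and> k \<ge> kstar a \<longrightarrow> card (pos_equilibria a b c k m) = 1) \<and>
              (m > m2 a c k \<and> k < kstar a \<longrightarrow> card (pos_equilibria a b c k m) = 2) \<and>
              (m = m2 a c k \<longrightarrow> card (pos_equilibria a b c k m) = 1) \<and>
              (m < m2 a c k \<and> k > kstar a \<longrightarrow> card (pos_equilibria a b c k m) = 1))) \<and>
        (c \<le> 1 \<and> k < kstar a \<longrightarrow> card (pos_equilibria a b c k m) = 1))) \<and>
    (m < m1 a c k \<and> c < 1 \<and> k < kstar a \<longrightarrow> card (pos_equilibria a b c k m) = 1)"
proof -
  have ce: "card (pos_equilibria a b c k m) = card (roots a c k m)" using pos by (intro card_eq) auto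
  have p1: "card (roots a c k m) = 1" if "m = m1 a c k" "c < 1" "k < kstar a"
    using caseB[of a c k m] pos that A3m1[of a c k m] by simp
  have p2a: "(u a c k m (xv2 a c k m) = 0 \<and> m > m2 a c k \<longrightarrow> card (roots a c k m) = 1) \<and>
           (u a c k m (xv2 a c k m) < 0 \<longrightarrow>
              (m > m2 a c k \<and> k \<ge> kstar a \<longrightarrow> card (roots a c k m) = 1) \<and>
              (m > m2 a c k \<and> k < kstar a \<longrightarrow> card (roots a c k m) = 2) \<and>
              (m = m2 a c k \<longrightarrow> card (roots a c k m) = 1) \<and>
              (m < m2 a c k \<and> k > kstar a \<longrightarrow> card (roots a c k m) = 1))"
    if "m > m1 a c k" "c > 1" "Delta a c k m > 0"
  proof -
    have "A3 a c k m < 0" using that A3m1[of a c k m] by simp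
    from caseA[OF pos(1) pos(3) pos(4) pos(5) this that(2) that(3)] show ?thesis .
  qed
  have p2b: "card (roots a c k m) = 1" if "m > m1 a c k" "c \<le> 1" "k < kstar a"
    using caseB[of a c k m] pos that A3m1[of a c k m] by simp
  have p3: "card (roots a c k m) = 1" if "m < m1 a c k" "c < 1" "k < kstar a"
  proof -
    have "k * (m1 a c k - m + k) > 0" using that pos by simp
    hence "A2 a c k m \<ge> 0" using A2m1[of a c k m] pos by simp
    thus ?thesis using caseB[of a c k m] pos that by simp
  qed
  show ?thesis unfolding ce using p1 p2a p2b p3 by blast
qed

end
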